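(* Let $N \geq 12$ and $1 \le \Delta \leq \frac{N}{2}$ be integers. Then $f(N,\Delta) \leq \frac{N^2}{3}$.
   Context: All graphs are finite and simple; $L(G)$ is the line graph of $G$; $e(\cdot)$, $\Delta(\cdot)$, $\delta(\cdot)$ denote number of edges, maximum degree and minimum degree. For integers $N \ge \Delta \ge 1$, $f(N,\Delta) = \max\{ e(L(G)) : e(G)=N, \Delta(G)=\Delta, \delta(G)\geq 1\}$, the maximum over all simple graphs $G$. *)

theory Defs
  imports Complex_Main
begin

text \<open>A finite simple graph on vertex set V (vertices of type nat; every finite
  graph is isomorphic to one of this form): E is a set of 2-element subsets of V.\<close>
definition simple_graph :: "nat set \<Rightarrow> nat set set \<Rightarrow> bool" where
  "simple_graph V E \<longleftrightarrow> finite V \<and> V \<noteq> {} \<and> (\<forall>e\<in>E. e \<subseteq> V \<and> card e = 2)"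

definition degree :: "nat set set \<Rightarrow> nat \<Rightarrow> nat" where
  "degree E v = card {e\<in>E. v \<in> e}"

definition max_degree :: "nat set \<Rightarrow> nat set set \<Rightarrow> nat" where
  "max_degree V E = Max (degree E ` V)"

definition min_degree :: "nat set \<Rightarrow> nat set set \<Rightarrow> nat" where
  "min_degree V E = Min (degree E ` V)"

definition line_graph_edges :: "nat set set \<Rightarrow> nat set set set" where
  "line_graph_edges E = {{e, f} | e f. e \<in> E \<and> f \<in> E \<and> e \<noteq> f \<and> e \<inter> f \<noteq> {}}"

definition f_max :: "nat \<Rightarrow> nat \<Rightarrow> nat" where
  "f_max N D = Max {card (line_graph_edges E) | V E.
      simple_graph V E \<and> card E = N \<and> max_degree V E = D \<and> min_degree V E \<ge> 1}"

end

theory Submission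
  imports Defs
begin

lemma handshake:
  assumes "finite V" "finite E" "\<forall>e\<in>E. e \<subseteq> V"
  shows "(\<Sum>u\<in>V. card {e\<in>E. u \<in> e}) = (\<Sum>e\<in>E. card e)"
proof -
  have "(\<Sum>u\<in>V. card {e\<in>E. u \<in> e}) = (\<Sum>u\<in>V. \<Sum>e\<in>E. if u \<in> e then 1 else 0)"
    using assms by (auto simp: sum.If_cases intro!: sum.cong arg_cong[where f=card])
  also have "\<dots> = (\<Sum>e\<in>E. \<Sum>u\<in>V. if u \<in> e then 1 else 0)" by (rule sum.swap)
  also have "\<dots> = (\<Sum>e\<in>E. card e)"
  proof (rule sum.cong)
    fix e assume "e \<in> E"
    then have "V \<inter> e = e" using assms by auto
    then show "(\<Sum>u\<in>V. if u \<in> e then 1 else 0) = card e" using assms by (auto simp: sum.If_cases intro!: sum.cong arg_cong[where f=card])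
  qed simp
  finally show ?thesis .
qed

lemma two_choose2: "2 * (n choose 2) = n * (n - 1)"
proof -
  have "even (n * (n - 1))" by (cases "even n") auto
  then show ?thesis by (simp add: choose_two)
qed

lemma pairs_le:
  assumes "simple_graph V E" "x \<in> V" "\<forall>v\<in>V. degree E v \<le> degree E x"
  defines "a \<equiv> degree E x"
  defines "M \<equiv> card E - a"
  shows "card (line_graph_edges E) \<le> (a choose 2) + 2 * M + min (M choose 2) (M * (a - 1))"
proof -
  have fV: "finite V" and sub: "\<forall>e\<in>E. e \<subseteq> V" and c2: "\<forall>e\<in>E. card e = 2"
    using assms(1) unfolding simple_graph_def by auto
  have fE: "finite E" using fV sub by (meson Pow_iff finite_Pow_iff finite_subset subsetI)
  define Sx where "Sx = {e\<in>E. x \<in> e}"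
  define E' where "E' = E - Sx"
  have cSx: "card Sx = a" unfolding Sx_def a_def degree_def ..
  have fSx: "finite Sx" using fE Sx_def by auto
  have fE': "finite E'" using fE E'_def by auto
  have cE': "card E' = M" unfolding E'_def M_def using fE cSx
    by (simp add: Sx_def card_Diff_subset)
  define P1 where "P1 = {S. S \<subseteq> Sx \<and> card S = 2}"
  define P2 where "P2 = (\<lambda>(f,v). {{x,v}, f}) ` (SIGMA f:E'. f)"
  define P3 where "P3 = line_graph_edges E'"
  have split: "line_graph_edges E \<subseteq> P1 \<union> P2 \<union> P3"
  proof
    fix p assume "p \<in> line_graph_edges E"
    then obtain e f where p: "p = {e,f}" "e \<in> E" "f \<in> E" "e \<noteq> f" "e \<inter> f \<noteq> {}"
      unfolding line_graph_edges_def by auto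
    have key: "p \<in> P2" if "e \<in> Sx" "f \<in> E'" "p = {e,f}" "e \<inter> f \<noteq> {}" for e f
    proof -
      have "x \<in> e" "e \<in> E" "x \<notin> f" using that unfolding Sx_def E'_def by auto
      then obtain v where ev: "e = {x,v}" using c2
        by (metis card_2_iff insert_commute insertE singletonD)
      then have "v \<in> f" using that \<open>x \<notin> f\<close> by auto
      then show ?thesis unfolding P2_def using that ev by (auto intro!: image_eqI[where x="(f,v)"])
    qed
    show "p \<in> P1 \<union> P2 \<union> P3"
    proof (cases "e \<in> Sx")
      case True
      show ?thesis
      proof (cases "f \<in> Sx")
        case True
        then have "p \<in> P1" using \<open>e \<in> Sx\<close> p unfolding P1_def by auto
        then show ?thesis by auto
      next
        case False
        then have "f \<in> E'" using p E'_def by auto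
        then show ?thesis using key[of e f] True p by auto
      qed
    next
      case False
      then have e': "e \<in> E'" using p E'_def by auto
      show ?thesis
      proof (cases "f \<in> Sx")
        case True
        then show ?thesis using key[of f e] e' p by (auto simp: insert_commute)
      next
        case False
        then have "f \<in> E'" using p E'_def by auto
        then have "p \<in> P3" using e' p unfolding P3_def line_graph_edges_def by auto
        then show ?thesis by auto
      qed
    qed
  qed
  have "card P1 = a choose 2" unfolding P1_def using fSx cSx by (simp add: n_subsets)
  have "card P2 \<le> card (SIGMA f:E'. f)" unfolding P2_def by (rule card_image_le) (use fE' E'_def fE sub fV in \<open>auto intro: finite_subset\<close>)
  also have "\<dots> = (\<Sum>f\<in>E'. card f)"
    by (rule card_SigmaI[OF fE']) (use E'_def sub fV in \<open>auto intro: finite_subset\<close>)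
  also have "\<dots> = 2 * M" using c2 cE' E'_def by simp
  finally have cP2: "card P2 \<le> 2 * M" .
  have P3a: "P3 \<subseteq> {S. S \<subseteq> E' \<and> card S = 2}"
    unfolding P3_def line_graph_edges_def by (auto simp: card_insert_if)
  have cP3a: "card P3 \<le> M choose 2"
    using card_mono[OF _ P3a] fE' cE' by (simp add: n_subsets)
  define st where "st u = {e\<in>E'. u \<in> e}" for u
  have P3b: "P3 \<subseteq> (\<Union>u\<in>V. {S. S \<subseteq> st u \<and> card S = 2})"
  proof
    fix p assume "p \<in> P3"
    then obtain e f where p: "p = {e,f}" "e \<in> E'" "f \<in> E'" "e \<noteq> f" "e \<inter> f \<noteq> {}"
      unfolding P3_def line_graph_edges_def by auto
    then obtain u where "u \<in> e" "u \<in> f" by auto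
    then have "u \<in> V" using sub p E'_def by auto
    then show "p \<in> (\<Union>u\<in>V. {S. S \<subseteq> st u \<and> card S = 2})"
      using p \<open>u \<in> e\<close> \<open>u \<in> f\<close> unfolding st_def by (auto simp: card_insert_if)
  qed
  have fst: "finite (st u)" for u using fE' st_def by auto
  have "card P3 \<le> card (\<Union>u\<in>V. {S. S \<subseteq> st u \<and> card S = 2})"
    by (rule card_mono[OF _ P3b]) (use fV fst in auto)
  also have "\<dots> \<le> (\<Sum>u\<in>V. card {S. S \<subseteq> st u \<and> card S = 2})"
    by (rule card_UN_le[OF fV])
  also have "\<dots> = (\<Sum>u\<in>V. card (st u) choose 2)" using fst by (simp add: n_subsets)
  finally have c3: "card P3 \<le> (\<Sum>u\<in>V. card (st u) choose 2)" .
  have stle: "card (st u) \<le> a" if "u \<in> V" for u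
  proof -
    have "card (st u) \<le> degree E u" unfolding st_def degree_def E'_def
      by (rule card_mono) (use fE in auto)
    then show ?thesis using assms(3) that a_def by fastforce
  qed
  have "2 * (\<Sum>u\<in>V. card (st u) choose 2) = (\<Sum>u\<in>V. card (st u) * (card (st u) - 1))"
    by (simp add: sum_distrib_left two_choose2)
  also have "\<dots> \<le> (\<Sum>u\<in>V. card (st u) * (a - 1))"
    by (rule sum_mono) (use stle in \<open>auto intro!: mult_le_mono2 diff_le_mono\<close>)
  also have "\<dots> = (\<Sum>u\<in>V. card (st u)) * (a - 1)" by (simp add: sum_distrib_right)
  also have "(\<Sum>u\<in>V. card (st u)) = (\<Sum>e\<in>E'. card e)"
    unfolding st_def by (rule handshake) (use fV fE' sub E'_def in auto)
  also have "\<dots> = 2 * M" using c2 cE' E'_def by simp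
  finally have "card P3 \<le> M * (a - 1)" using c3 by simp
  then have cP3: "card P3 \<le> min (M choose 2) (M * (a - 1))" using cP3a by simp
  have "card (line_graph_edges E) \<le> card (P1 \<union> P2 \<union> P3)"
  proof (rule card_mono[OF _ split])
    have "finite (SIGMA f:E'. f)" using fE' E'_def sub fV by (auto intro: finite_subset)
    then have "finite P2" unfolding P2_def by simp
    moreover have "finite P3" using P3a fE' by (auto intro: finite_subset[where B="Pow E'"])
    moreover have "finite P1" using fSx unfolding P1_def by auto
    ultimately show "finite (P1 \<union> P2 \<union> P3)" by simp
  qed
  also have "\<dots> \<le> card P1 + card P2 + card P3"
    by (meson card_Un_le add_le_mono order_trans le_refl)
  finally show ?thesis using \<open>card P1 = a choose 2\<close> cP2 cP3 by linarith
qed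

lemma arithA:
  fixes D t :: int
  assumes "D \<ge> 1" "t \<ge> -1" "3*D+t \<ge> 12"
  shows "3*(D*(D-1) + 4*(2*D+t) + 2*(2*D+t)*(D-1)) \<le> 2*(3*D+t)^2"
proof -
  have e: "2*(3*D+t)^2 - 3*(D*(D-1) + 4*(2*D+t) + 2*(2*D+t)*(D-1)) = 3*D*(D-3) + 6*t*(D-1) + 2*t^2"
    by (simp add: algebra_simps power2_eq_square)
  have "3*D*(D-3) + 6*t*(D-1) + 2*t^2 \<ge> 0"
  proof (cases "t = -1")
    case True
    then have "D \<ge> 5" using assms by linarith
    have "3*D*(D-3) + 6*t*(D-1) + 2*t^2 = 3*D*(D-5) + 8" using True by (simp add: algebra_simps power2_eq_square)
    moreover have "3*D*(D-5) \<ge> 0" using \<open>D \<ge> 5\<close> by simp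
    ultimately show ?thesis by linarith
  next
    case False
    then have t0: "t \<ge> 0" using assms by linarith
    show ?thesis
    proof (cases "D \<ge> 3")
      case True
      have "3*D*(D-3) \<ge> 0" "6*t*(D-1) \<ge> 0" "2*t^2 \<ge> 0" using True t0 by auto
      then show ?thesis by linarith
    next
      case False
      then have "D = 1 \<or> D = 2" using assms by linarith
      moreover have tt: "t*t \<ge> 6*t" using assms t0 False by (intro mult_right_mono) auto
      ultimately show ?thesis using assms t0 by (elim disjE; simp add: power2_eq_square; linarith)
    qed
  qed
  then show ?thesis using e by linarith
qed

lemma arithB:
  fixes D s :: int
  assumes "s \<ge> 0" "s \<le> D - 2" "2*D+s \<ge> 12"
  shows "3*(D*(D-1) + 4*(D+s) + (D+s)*(D+s-1)) \<le> 2*(2*D+s)^2"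
proof -
  have e: "2*(2*D+s)^2 - 3*(D*(D-1) + 4*(D+s) + (D+s)*(D+s-1)) = 2*D^2 + 2*D*s - s^2 - 6*D - 9*s"
    by (simp add: algebra_simps power2_eq_square)
  have D5: "D \<ge> 5" using assms by linarith
  have ss: "s*s \<le> D*s" using assms by (intro mult_right_mono) auto
  have "2*D^2 + D*s - 6*D - 9*s \<ge> 0"
  proof (cases "D \<ge> 9")
    case True
    have "2*D*(D-3) \<ge> 0" "s*(D-9) \<ge> 0" using True assms by auto
    moreover have "2*D^2 + D*s - 6*D - 9*s = 2*D*(D-3) + s*(D-9)" by (simp add: algebra_simps power2_eq_square)
    ultimately show ?thesis by linarith
  next
    case False
    have "s*(9-D) \<le> (D-2)*(9-D)" using False assms by (intro mult_right_mono) auto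
    moreover have "3*D^2 - 17*D + 18 \<ge> 0" 
    proof -
      have "(D-5)*(3*D-2) \<ge> 0" using D5 by simp
      moreover have "(D-5)*(3*D-2) + 8 = 3*D^2 - 17*D + 18" by (simp add: algebra_simps power2_eq_square)
      ultimately show ?thesis by linarith
    qed
    ultimately show ?thesis by (simp add: algebra_simps power2_eq_square)
  qed
  then show ?thesis using e ss by (simp add: power2_eq_square)
qed

lemma arith_nat:
  fixes N D :: nat
  assumes "N \<ge> 12" "1 \<le> D" "2*D \<le> N"
  shows "3*((D choose 2) + 2*(N-D) + min ((N-D) choose 2) ((N-D)*(D-1))) \<le> N^2"
proof -
  define M where "M = N - D"
  have iM: "int M = int N - int D" using assms M_def by simp
  have iD: "int (D - 1) = int D - 1" using assms by simp
  have iM1: "int (M - 1) = int M - 1" using assms M_def by simp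
  have eq: "2*(3*((D choose 2) + 2*M + min (M choose 2) (M*(D-1))))
     = 3*(D*(D-1) + 4*M + min (M*(M-1)) (2*M*(D-1)))"
  proof -
    have h1: "2*(D choose 2) = D*(D-1)" and h2: "2*(M choose 2) = M*(M-1)" by (rule two_choose2)+
    have h3: "2 * min (M choose 2) (M*(D-1)) = min (M*(M-1)) (2*M*(D-1))"
    proof -
      have g: "2*min x y = min (2*x) (2*y)" for x y :: nat by (simp add: min_def)
      show ?thesis unfolding g h2 by (simp add: mult.assoc)
    qed
    have gen: "2*(3*(c + 2*K + m)) = 3*(p + 4*K + q)" if "2*c = p" "2*m = q" for c m p q K :: nat
      using that by presburger
    show ?thesis by (rule gen[OF h1 h3])
  qed
  have "3*(D*(D-1) + 4*M + min (M*(M-1)) (2*M*(D-1))) \<le> 2*N^2"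
  proof (cases "3*D \<le> N+1")
    case True
    have "3*(int D*(int D-1) + 4*(2*int D+(int N - 3*int D)) + 2*(2*int D+(int N - 3*int D))*(int D-1))
       \<le> 2*(3*int D+(int N - 3*int D))^2"
      by (rule arithA) (use assms True in auto)
    moreover have r1: "2*int D+(int N - 3*int D) = int M" and r2: "3*int D+(int N - 3*int D) = int N"
      using iM by simp_all
    ultimately have "3*(int D*(int D-1) + 4*int M + 2*int M*(int D-1)) \<le> 2*(int N)^2"
      by (simp only: r1 r2)
    moreover have "int (3*(D*(D-1) + 4*M + 2*M*(D-1))) = 3*(int D*(int D-1) + 4*int M + 2*int M*(int D-1))"
      by (simp only: of_nat_mult of_nat_add of_nat_numeral iD)
    ultimately have "int (3*(D*(D-1) + 4*M + 2*M*(D-1))) \<le> int (2*N^2)" by simp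
    then have "3*(D*(D-1) + 4*M + 2*M*(D-1)) \<le> 2*N^2" by linarith
    then show ?thesis by (simp split: split_min)
  next
    case False
    have "3*(int D*(int D-1) + 4*(int D+(int N - 2*int D)) + (int D+(int N - 2*int D))*(int D+(int N - 2*int D)-1))
       \<le> 2*(2*int D+(int N - 2*int D))^2"
      by (rule arithB) (use assms False in auto)
    moreover have r1: "int D+(int N - 2*int D) = int M" and r2: "2*int D+(int N - 2*int D) = int N"
      using iM by simp_all
    ultimately have "3*(int D*(int D-1) + 4*int M + int M*(int M-1)) \<le> 2*(int N)^2"
      by (simp only: r1 r2)
    moreover have "int (3*(D*(D-1) + 4*M + M*(M-1))) = 3*(int D*(int D-1) + 4*int M + int M*(int M-1))"
      by (simp only: of_nat_mult of_nat_add of_nat_numeral iD iM1)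
    ultimately have "int (3*(D*(D-1) + 4*M + M*(M-1))) \<le> int (2*N^2)" by simp
    then have "3*(D*(D-1) + 4*M + M*(M-1)) \<le> 2*N^2" by linarith
    then show ?thesis by (simp split: split_min)
  qed
  then have "2*(3*((D choose 2) + 2*M + min (M choose 2) (M*(D-1)))) \<le> 2*N^2" using eq by simp
  then show ?thesis unfolding M_def by simp
qed

lemma witness:
  fixes N D :: nat
  assumes "1 \<le> D" "D \<le> N"
  shows "\<exists>V E. simple_graph V E \<and> card E = N \<and> max_degree V E = D \<and> min_degree V E \<ge> 1"
proof -
  define K where "K = N - D"
  define St where "St = (\<lambda>i. {0::nat, i}) ` {1..D}"
  define Ma where "Ma = (\<lambda>i. {2*i, 2*i+1::nat}) ` {D+1..<D+1+K}"
  define V where "V = {0..D} \<union> {2*(D+1)..<2*(D+1)+2*K}"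
  define E where "E = St \<union> Ma"
  have fV: "finite V" unfolding V_def by simp
  have sg: "simple_graph V E"
    unfolding simple_graph_def
  proof (intro conjI)
    show "finite V" by (rule fV)
    show "V \<noteq> {}" unfolding V_def by auto
    show "\<forall>e\<in>E. e \<subseteq> V \<and> card e = 2"
      unfolding E_def St_def Ma_def V_def by auto
  qed
  have cSt: "card St = D" unfolding St_def
    by (subst card_image) (auto simp: inj_on_def doubleton_eq_iff)
  have cMa: "card Ma = K" unfolding Ma_def
    by (subst card_image) (auto simp: inj_on_def doubleton_eq_iff)
  have disj: "St \<inter> Ma = {}" unfolding St_def Ma_def by (auto simp: doubleton_eq_iff)
  have cE: "card E = N" unfolding E_def
    using card_Un_disjoint[OF _ _ disj] cSt cMa K_def assms unfolding St_def Ma_def by simp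
  have d0: "degree E 0 = D"
  proof -
    have "{e\<in>E. 0 \<in> e} = St" unfolding E_def St_def Ma_def by auto
    then show ?thesis using cSt unfolding degree_def by simp
  qed
  have d1: "degree E v = 1" if "v \<in> V" "v \<noteq> 0" for v
  proof (cases "v \<le> D")
    case True
    then have "{e\<in>E. v \<in> e} = {{0,v}}" using that unfolding E_def St_def Ma_def V_def by auto
    then show ?thesis unfolding degree_def by simp
  next
    case False
    then have v: "2*(D+1) \<le> v" "v < 2*(D+1)+2*K" using that unfolding V_def by auto
    define i where "i = v div 2"
    have i: "i \<in> {D+1..<D+1+K}" using v unfolding i_def by auto
    have vi: "v = 2*i \<or> v = 2*i+1" unfolding i_def by presburger
    have "{e\<in>E. v \<in> e} = {{2*i,2*i+1}}"
    proof
      show "{{2*i,2*i+1}} \<subseteq> {e\<in>E. v \<in> e}" using i vi unfolding E_def Ma_def by auto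
      show "{e\<in>E. v \<in> e} \<subseteq> {{2*i,2*i+1}}"
      proof
        fix e assume e: "e \<in> {e\<in>E. v \<in> e}"
        show "e \<in> {{2*i,2*i+1}}"
        proof (cases "e \<in> St")
          case True
          then show ?thesis using e v unfolding St_def by auto
        next
          case False
          then obtain j where "e = {2*j, 2*j+1}" using e unfolding E_def Ma_def by auto
          moreover have "j = i" using e calculation unfolding i_def by auto
          ultimately show ?thesis by simp
        qed
      qed
    qed
    then show ?thesis unfolding degree_def by simp
  qed
  have zV: "0 \<in> V" unfolding V_def by simp
  have "max_degree V E = D" unfolding max_degree_def
  proof (rule Max_eqI)
    show "finite (degree E ` V)" using fV by simp
    show "y \<le> D" if yy: "y \<in> degree E ` V" for y
    proof -
      obtain v where "v \<in> V" "y = degree E v" using yy by auto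
      then show ?thesis using d0 d1[of v] assms by (cases "v = 0") auto
    qed
    show "D \<in> degree E ` V" using zV d0 by force
  qed
  moreover have "min_degree V E \<ge> 1" unfolding min_degree_def
  proof (subst Min_ge_iff)
    show "\<forall>a\<in>degree E ` V. 1 \<le> a"
    proof
      fix y assume "y \<in> degree E ` V"
      then obtain v where "v \<in> V" "y = degree E v" by auto
      then show "1 \<le> y" using d0 d1[of v] assms by (cases "v = 0") auto
    qed
  qed (use fV zV in auto)
  ultimately show ?thesis using sg cE by blast
qed

theorem mainTheorem15:
  fixes N D :: nat
  assumes "N \<ge> 12" and "1 \<le> D" and "real D \<le> real N / 2"
  shows "real (f_max N D) \<le> real N ^ 2 / 3"
proof -
  have D2: "2*D \<le> N" using assms(3) by linarith
  define S where "S = {card (line_graph_edges E) | V E.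
      simple_graph V E \<and> card E = N \<and> max_degree V E = D \<and> min_degree V E \<ge> 1}"
  have bound: "3*c \<le> N^2" if cS: "c \<in> S" for c
  proof -
    obtain V E where VE: "c = card (line_graph_edges E)" "simple_graph V E" "card E = N"
      "max_degree V E = D" using cS unfolding S_def by blast
    have fV: "finite V" "V \<noteq> {}" using VE(2) unfolding simple_graph_def by auto
    have "D \<in> degree E ` V" using VE(4) fV unfolding max_degree_def by (metis Max_in finite_imageI image_is_empty)
    then obtain x where x: "x \<in> V" "degree E x = D" by auto
    have le: "\<forall>v\<in>V. degree E v \<le> degree E x"
      using VE(4) fV x unfolding max_degree_def by auto
    have "c \<le> (D choose 2) + 2 * (N - D) + min ((N - D) choose 2) ((N - D) * (D - 1))"
      using pairs_le[OF VE(2) x(1) le] VE x by simp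
    then have "3*c \<le> 3*((D choose 2) + 2 * (N - D) + min ((N - D) choose 2) ((N - D) * (D - 1)))" by simp
    also have "\<dots> \<le> N^2" by (rule arith_nat) (use assms D2 in auto)
    finally show ?thesis .
  qed
  have fin: "finite S"
    by (rule finite_subset[of S "{..N^2}"]) (use bound in \<open>auto simp: subset_iff\<close>, fastforce)
  have ne: "S \<noteq> {}" using witness[of D N] assms D2 unfolding S_def by auto
  have "Max S \<in> S" using fin ne by (rule Max_in)
  then have "3 * Max S \<le> N^2" by (rule bound)
  then have "3 * real (Max S) \<le> real N ^ 2" by (metis of_nat_le_iff of_nat_mult of_nat_numeral of_nat_power)
  moreover have "f_max N D = Max S" unfolding f_max_def S_def ..
  ultimately show ?thesis by simp
qed

end
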